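(* Let $n\geq 3$ be an odd integer. Then $n$ is composite or $n\equiv 1\pmod 4$ if and only if there exists an integer $d$ such that both $d$ and $-d$ are quadratic nonresidues modulo $n$.
   Context: An integer $d$ is a quadratic residue modulo $n$ if $d\not\equiv 0 \pmod n$ and $d\equiv x^2\pmod n$ for some integer $x$; it is a quadratic nonresidue modulo $n$ if $d\not\equiv x^2 \pmod n$ for every integer $x$. *)

theory Defs
  imports "HOL-Number_Theory.Number_Theory"
begin

definition quad_nonres :: "int \<Rightarrow> int \<Rightarrow> bool" where
  "quad_nonres n d \<longleftrightarrow> (\<forall>x::int. \<not> [d = x^2] (mod n))"

end

theory Submission
  imports Defs
begin

lemma qn_iff: "quad_nonres n d \<longleftrightarrow> \<not> QuadRes n d"
  unfolding quad_nonres_def QuadRes_def by (auto simp: cong_sym_eq)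

lemma nonres_exists:
  fixes n :: int assumes "n \<ge> 3" shows "\<exists>r. quad_nonres n r"
proof -
  define f where "f = (\<lambda>x::int. x^2 mod n)"
  have sub: "f ` {0..<n} \<subseteq> {0..<n}" using assms by (auto simp: f_def)
  have "f 1 = f (n - 1)"
  proof -
    have "(n-1)^2 = 1 + n * (n - 2)" by (simp add: power2_eq_square algebra_simps)
    then show ?thesis unfolding f_def by simp
  qed
  moreover have "(1::int) \<noteq> n - 1" "1 \<in> {0..<n}" "n - 1 \<in> {0..<n}" using assms by auto
  ultimately have ninj: "\<not> inj_on f {0..<n}" unfolding inj_on_def by blast
  have "card (f ` {0..<n}) \<noteq> card {0..<n}"
    using ninj eq_card_imp_inj_on[of "{0..<n}" f] by auto
  moreover have "card (f ` {0..<n}) \<le> card {0..<n}" by (rule card_image_le) simp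
  ultimately have "card (f ` {0..<n}) < card {0..<n}" by linarith
  then have "f ` {0..<n} \<noteq> {0..<n}" by auto
  with sub obtain r where r: "r \<in> {0..<n}" "r \<notin> f ` {0..<n}" by blast
  have "quad_nonres n r"
    unfolding quad_nonres_def
  proof
    fix x :: int
    show "\<not> [r = x^2] (mod n)"
    proof
      assume "[r = x^2] (mod n)"
      then have "r mod n = x^2 mod n" by (simp add: cong_def)
      also have "\<dots> = (x mod n)^2 mod n" by (simp add: power_mod)
      finally have "r = f (x mod n)" using r(1) by (simp add: f_def)
      moreover have "x mod n \<in> {0..<n}" using assms by auto
      ultimately show False using r(2) by blast
    qed
  qed
  then show ?thesis by blast
qed

lemma nonres_dvd:
  assumes "k dvd n" "quad_nonres k d" shows "quad_nonres n d"
  using assms unfolding quad_nonres_def by (meson cong_dvd_modulus)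

lemma euler_nat:
  fixes p :: int assumes "prime p" "p \<ge> 3"
  shows "[Legendre x p = x ^ nat ((p - 1) div 2)] (mod p)"
proof -
  have "prime (nat p)" using assms by simp
  moreover have "2 < nat p" using assms by simp
  ultimately have E: "[Legendre x (int (nat p)) = x ^ ((nat p - 1) div 2)] (mod int (nat p))"
    by (rule euler_criterion)
  have pn: "int (nat p) = p" using assms by simp
  have ex: "(nat p - 1) div 2 = nat ((p-1) div 2)" using assms
    by (simp add: nat_div_distrib nat_diff_distrib)
  show ?thesis using E unfolding pn ex .
qed

lemma euler_nonres:
  fixes p :: int assumes "prime p" "p \<ge> 3" "quad_nonres p x"
  shows "[-1 = x ^ nat ((p - 1) div 2)] (mod p)"
proof -
  have "\<not> [x = 0^2] (mod p)"
    using assms(3) unfolding quad_nonres_def by blast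
  then have "\<not> [x = 0] (mod p)" by simp
  moreover have "\<not> QuadRes p x" using assms(3) qn_iff by blast
  ultimately have "Legendre x p = -1" by (simp add: Legendre_def)
  moreover have "[Legendre x p = x ^ nat ((p - 1) div 2)] (mod p)"
    using euler_nat assms by blast
  ultimately show ?thesis by simp
qed

lemma cong_m1_1:
  fixes p :: int assumes "p \<ge> 3" "[-1 = 1] (mod p)" shows False
proof -
  have "p dvd 2" using assms(2) by (simp add: cong_iff_dvd_diff)
  then show False using assms(1) zdvd_imp_le by fastforce
qed

lemma prime3:
  fixes p :: int assumes "prime p" "p \<ge> 3" "p mod 4 = 3"
  shows "\<not> (quad_nonres p d \<and> quad_nonres p (-d))"
proof
  assume h: "quad_nonres p d \<and> quad_nonres p (-d)"
  define k where "k = nat ((p - 1) div 2)"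
  have "odd k"
  proof -
    have "(p-1) div 2 = 2*(p div 4) + 1" using assms by presburger
    moreover have "p div 4 \<ge> 0" using assms by simp
    ultimately show ?thesis unfolding k_def by (simp add: nat_add_distrib nat_mult_distrib)
  qed
  then have e: "(-d)^k = - (d^k)" by simp
  have a: "[-1 = d^k] (mod p)" using euler_nonres assms h k_def by blast
  have b: "[-1 = (-d)^k] (mod p)" using euler_nonres assms h k_def by blast
  then have "[1 = d^k] (mod p)" using e
    by (metis cong_minus_minus_iff minus_minus)
  then have "[-1 = 1] (mod p)" using a by (meson cong_sym cong_trans)
  then show False using cong_m1_1 assms by blast
qed

lemma prime1:
  fixes p :: int assumes "prime p" "p \<ge> 3" "p mod 4 = 1"
  shows "\<exists>d. quad_nonres p d \<and> quad_nonres p (-d)"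
proof -
  obtain r where r: "quad_nonres p r" using nonres_exists assms by blast
  define k where "k = nat ((p - 1) div 2)"
  have "even k"
  proof -
    have "(p-1) div 2 = 2*(p div 4)" using assms by presburger
    moreover have "p div 4 \<ge> 0" using assms by simp
    ultimately show ?thesis unfolding k_def by (simp add: nat_mult_distrib)
  qed
  then have e: "(-r)^k = r^k" by simp
  have a: "[-1 = r^k] (mod p)" using euler_nonres assms r k_def by blast
  have L: "[Legendre (-r) p = (-r)^k] (mod p)"
    using euler_nat assms unfolding k_def by blast
  then have L2: "[Legendre (-r) p = -1] (mod p)" using a e by (metis cong_sym cong_trans)
  have "Legendre (-r) p = -1"
  proof (cases "[-r = 0] (mod p)")
    case True
    then have "[0 = -1] (mod p)" using L2 by (simp add: Legendre_def)
    then have "p dvd 1" by (simp add: cong_iff_dvd_diff)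
    then show ?thesis using assms by auto
  next
    case False
    show ?thesis
    proof (rule ccontr)
      assume "Legendre (-r) p \<noteq> -1"
      then have "Legendre (-r) p = 1" using False by (simp add: Legendre_def split: if_splits)
      then have "[-1 = 1] (mod p)" using L2 by (metis cong_sym)
      then show False using cong_m1_1 assms by blast
    qed
  qed
  then have "\<not> QuadRes p (-r)" by (simp add: Legendre_def split: if_splits)
  then show ?thesis using r qn_iff by blast
qed

lemma composite:
  fixes n :: int assumes "odd n" "n \<ge> 3" "\<not> prime n"
  shows "\<exists>d. quad_nonres n d \<and> quad_nonres n (-d)"
proof -
  have "n \<noteq> 0" "\<not> is_unit n" using assms by auto
  then obtain p where p0: "prime p" "p dvd n" using prime_divisor_exists[of n] by blast
  then have p: "prime p" "p dvd n" "p > 0" using prime_gt_0_int by auto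
  obtain m where m: "n = p * m" using p by blast
  have p3: "p \<ge> 3"
  proof -
    have "p \<ge> 2" using p prime_ge_2_int by blast
    moreover have "p \<noteq> 2" using p assms(1) by auto
    ultimately show ?thesis by linarith
  qed
  have mpos: "m > 0" using m p assms zero_less_mult_pos[of p m] by simp
  have "m \<noteq> 1" using m assms p by auto
  moreover have "odd m" using m assms by auto
  ultimately have m3: "m \<ge> 3" using mpos by presburger
  show ?thesis
  proof (cases "p dvd m")
    case True
    then obtain t where t: "n = p*p*t" using m by auto
    have pp: "p*p dvd n" using t by simp
    have key: "\<not> [s * p = x^2] (mod p*p)" if s: "s = 1 \<or> s = -1" for s x
    proof
      assume c: "[s * p = x^2] (mod p*p)"
      then have "p*p dvd x^2 - s*p" by (simp add: cong_iff_dvd_diff dvd_diff_commute)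
      then have "p dvd x^2 - s*p" using dvd_mult_left by blast
      moreover have "p dvd s*p" by simp
      ultimately have "p dvd (x^2 - s*p) + s*p" by (rule dvd_add)
      then have "p dvd x^2" by simp
      then have "p dvd x" using p prime_dvd_power by blast
      then have "p*p dvd x^2" by (simp add: power2_eq_square mult_dvd_mono)
      then have "p*p dvd x^2 - (x^2 - s*p)" using \<open>p*p dvd x^2 - s*p\<close> by (rule dvd_diff)
      then have "p*p dvd s*p" by simp
      then have "p dvd s" using p by simp
      then show False using s p3 by auto
    qed
    have "quad_nonres n p"
      using nonres_dvd[OF pp] key[of 1] unfolding quad_nonres_def by auto
    moreover have "quad_nonres n (-p)"
      using nonres_dvd[OF pp] key[of "-1"] unfolding quad_nonres_def by auto
    ultimately show ?thesis by blast
  next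
    case False
    then have cop: "coprime p m" using p prime_imp_coprime by blast
    obtain r where r: "quad_nonres p r" using nonres_exists p3 by blast
    obtain s where s: "quad_nonres m s" using nonres_exists m3 by blast
    obtain u v where uv: "u*p + v*m = 1" using cop bezout_int[of p m] by auto
    define d where "d = r*(v*m) - s*(u*p)"
    have vm: "v*m = 1 - u*p" using uv by linarith
    have um: "u*p = 1 - v*m" using uv by linarith
    have "[d = r] (mod p)"
    proof -
      have e1: "r*(v*m) = r*(1 - u*p)" by (metis vm)
      have e2: "r*(1 - u*p) = r - p*(r*u)" by (simp add: algebra_simps)
      have e3: "s*(u*p) = p*(s*u)" by (simp add: algebra_simps)
      have "d - r = p * (- (r*u) - s*u)" unfolding d_def using e1 e2 e3 by (simp add: algebra_simps)
      then show ?thesis by (metis cong_iff_dvd_diff dvd_triv_left)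
    qed
    then have d1: "quad_nonres p d" using r unfolding quad_nonres_def by (meson cong_sym cong_trans)
    have "[-d = s] (mod m)"
    proof -
      have e1: "s*(u*p) = s*(1 - v*m)" by (metis um)
      have e2: "s*(1 - v*m) = s - m*(s*v)" by (simp add: algebra_simps)
      have e3: "r*(v*m) = m*(r*v)" by (simp add: algebra_simps)
      have "-d - s = m * (- (r*v) - s*v)" unfolding d_def using e1 e2 e3 by (simp add: algebra_simps)
      then show ?thesis by (metis cong_iff_dvd_diff dvd_triv_left)
    qed
    then have d2: "quad_nonres m (-d)" using s unfolding quad_nonres_def by (meson cong_sym cong_trans)
    have "quad_nonres n d" using nonres_dvd[OF _ d1, of n] m by simp
    moreover have "quad_nonres n (-d)" using nonres_dvd[OF _ d2, of n] m by simp
    ultimately show ?thesis by blast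
  qed
qed

theorem mainTheorem3:
  fixes n :: int
  assumes "odd n" and "n \<ge> 3"
  shows "(\<not> prime n \<or> [n = 1] (mod 4)) \<longleftrightarrow>
         (\<exists>d::int. quad_nonres n d \<and> quad_nonres n (-d))"
proof
  assume "\<not> prime n \<or> [n = 1] (mod 4)"
  then show "\<exists>d::int. quad_nonres n d \<and> quad_nonres n (-d)"
  proof
    assume "\<not> prime n" then show ?thesis using composite assms by blast
  next
    assume h: "[n = 1] (mod 4)"
    show ?thesis
    proof (cases "prime n")
      case True
      have "n mod 4 = 1" using h by (simp add: cong_def)
      then show ?thesis using prime1 True assms by blast
    next
      case False then show ?thesis using composite assms by blast
    qed
  qed
next
  assume ex: "\<exists>d::int. quad_nonres n d \<and> quad_nonres n (-d)"
  show "\<not> prime n \<or> [n = 1] (mod 4)"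
  proof (rule ccontr)
    assume "\<not> (\<not> prime n \<or> [n = 1] (mod 4))"
    then have pr: "prime n" and "n mod 4 \<noteq> 1" by (auto simp: cong_def)
    then have "n mod 4 = 3" using assms(1) by presburger
    then show False using prime3 pr assms ex by blast
  qed
qed

end
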